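(* Let $N\ge 2$ and $L\ge 2$ be integers. There is no bijection $h:\mathbb{Z}/N^L\mathbb{Z}\to(\mathbb{Z}/N\mathbb{Z})^L$ together with a binary operation $g:\mathbb{Z}/N\mathbb{Z}\times\mathbb{Z}/N\mathbb{Z}\to\mathbb{Z}/N\mathbb{Z}$ such that $h(ab)_i=g(h(a)_i,h(b)_i)$ for all $a,b\in\mathbb{Z}/N^L\mathbb{Z}$ and all $i\in\{1,\ldots,L\}$ (here $ab$ is the product in the ring $\mathbb{Z}/N^L\mathbb{Z}$ and $h(a)_i$ the $i$-th coordinate of $h(a)$). *)

theory Defs
  imports "HOL-Library.FuncSet"
begin

text \<open>Z/mZ is modelled as {0..<m} with multiplication (a*b) mod m.
  (Z/NZ)^L is modelled as the extensional functions {0..<L} -> {0..<N}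
  (coordinate i of the paper corresponds to index i-1).\<close>

end

theory Submission imports Defs "HOL-Computational_Algebra.Primes" begin

lemma mult_rad:
  fixes N q :: nat
  assumes "N > 0" "prime q"
  shows "multiplicity q (\<Prod>(prime_factors N)) = (if q dvd N then 1 else 0)"
proof (cases "q dvd N")
  case True
  then have qP: "q \<in> prime_factors N" using assms by (auto simp: prime_factors_dvd)
  have fin: "finite (prime_factors N)" by simp
  have eq: "\<Prod>(prime_factors N) = q * \<Prod>(prime_factors N - {q})"
    using prod.remove[OF fin qP, of "\<lambda>x. x"] by simp
  have nd: "\<not> q dvd \<Prod>(prime_factors N - {q})"
  proof
    assume "q dvd \<Prod>(prime_factors N - {q})"
    then obtain p where "p \<in> prime_factors N - {q}" "q dvd p"
      using prime_dvd_prod_iff[of "prime_factors N - {q}" q "\<lambda>x. x"] assms by auto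
    then show False using assms(2) by (auto dest: primes_dvd_imp_eq)
  qed
  have "q \<noteq> 0" using assms by auto
  have R0: "\<Prod>(prime_factors N - {q}) \<noteq> 0" by (simp add: prime_factors_dvd)
  have "multiplicity q (q * \<Prod>(prime_factors N - {q})) = Suc (multiplicity q (\<Prod>(prime_factors N - {q})))"
    using R0 assms(2) by (intro multiplicity_times_same) auto
  then show ?thesis using True eq nd not_dvd_imp_multiplicity_0 by simp
next
  case False
  have "\<not> q dvd \<Prod>(prime_factors N)"
  proof
    assume "q dvd \<Prod>(prime_factors N)"
    then obtain p where "p \<in> prime_factors N" "q dvd p"
      using prime_dvd_prod_iff[of "prime_factors N" q "\<lambda>x. x"] assms by auto
    then show False using assms(2) False
      by (metis dvd_trans in_prime_factors_iff)
  qed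
  then show ?thesis using False not_dvd_imp_multiplicity_0 by simp
qed

lemma mult_le_self:
  fixes N q :: nat
  assumes "N > 0" "prime q"
  shows "multiplicity q N \<le> N"
proof -
  have "q ^ multiplicity q N dvd N" by (rule multiplicity_dvd)
  then have "q ^ multiplicity q N \<le> N" using assms(1) by (rule dvd_imp_le)
  moreover have "multiplicity q N < 2 ^ multiplicity q N" by (rule less_exp)
  moreover have "2 ^ multiplicity q N \<le> q ^ multiplicity q N"
    using assms(2) prime_ge_2_nat power_mono by blast
  ultimately show ?thesis by linarith
qed

lemma nil_iff:
  fixes N L a :: nat
  assumes "N \<ge> 2" "L \<ge> 1"
  shows "N ^ L dvd a ^ (N * L) \<longleftrightarrow> \<Prod>(prime_factors N) dvd a"
proof
  assume H: "N ^ L dvd a ^ (N * L)"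
  show "\<Prod>(prime_factors N) dvd a"
  proof (cases "a = 0")
    case True then show ?thesis by simp
  next
    case False
    show ?thesis
    proof (rule multiplicity_le_imp_dvd)
      show "\<Prod>(prime_factors N) \<noteq> 0" by (simp add: prime_factors_dvd)
    next
      fix q :: nat assume q: "prime q"
      show "multiplicity q (\<Prod>(prime_factors N)) \<le> multiplicity q a"
      proof (cases "q dvd N")
        case True
        have "N dvd N ^ L" using assms(2) by (cases L) auto
        then have "q dvd N ^ L" using True by (rule dvd_trans[rotated])
        then have "q dvd a ^ (N*L)" using H by (rule dvd_trans)
        then have "q dvd a" using q prime_dvd_power by blast
        then have "multiplicity q a \<ge> 1" using False q
          by (simp add: Suc_le_eq prime_multiplicity_gt_zero_iff)
        then show ?thesis using mult_rad[of N q] assms q by simp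
      next
        case False
        then show ?thesis using mult_rad[of N q] assms q by simp
      qed
    qed
  qed
next
  assume H: "\<Prod>(prime_factors N) dvd a"
  show "N ^ L dvd a ^ (N * L)"
  proof (cases "a = 0")
    case True then show ?thesis using assms by (simp add: power_0_left)
  next
    case False
    show ?thesis
    proof (rule multiplicity_le_imp_dvd)
      show "N ^ L \<noteq> 0" using assms by simp
    next
      fix q :: nat assume q: "prime q"
      have r0: "\<Prod>(prime_factors N) \<noteq> 0" by (simp add: prime_factors_dvd)
      have m1: "multiplicity q (N ^ L) = L * multiplicity q N"
        using q assms by (simp add: prime_elem_multiplicity_power_distrib)
      have m2: "multiplicity q (a ^ (N*L)) = (N*L) * multiplicity q a"
        using q False by (simp add: prime_elem_multiplicity_power_distrib)
      have m3: "multiplicity q (\<Prod>(prime_factors N)) \<le> multiplicity q a"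
        using H False by (simp add: dvd_imp_multiplicity_le)
      show "multiplicity q (N ^ L) \<le> multiplicity q (a ^ (N*L))"
      proof (cases "q dvd N")
        case True
        then have "multiplicity q a \<ge> 1" using m3 mult_rad[of N q] assms q by simp
        moreover have "multiplicity q N \<le> N" using mult_le_self[of N q] assms q by simp
        ultimately have "L * multiplicity q N \<le> (N*L) * multiplicity q a"
        proof -
          assume h1: "multiplicity q a \<ge> 1" and h2: "multiplicity q N \<le> N"
          have "L * multiplicity q N \<le> L * N" using h2 by (rule mult_le_mono2)
          also have "\<dots> = (N*L) * 1" by simp
          also have "\<dots> \<le> (N*L) * multiplicity q a" using h1 by (rule mult_le_mono2)
          finally show ?thesis .
        qed
        then show ?thesis using m1 m2 by simp
      next
        case False
        then have "multiplicity q N = 0" by (rule not_dvd_imp_multiplicity_0)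
        then show ?thesis using m1 by simp
      qed
    qed
  qed
qed

fun gpow :: "(nat \<Rightarrow> nat \<Rightarrow> nat) \<Rightarrow> nat \<Rightarrow> nat \<Rightarrow> nat" where
  "gpow g x 0 = x"
| "gpow g x (Suc j) = g (gpow g x j) x"

theorem mainTheorem16:
  fixes N L :: nat
  assumes "N \<ge> 2" and "L \<ge> 2"
  shows "\<not> (\<exists>(h :: nat \<Rightarrow> nat \<Rightarrow> nat) (g :: nat \<Rightarrow> nat \<Rightarrow> nat).
            bij_betw h {0..<N ^ L} ({0..<L} \<rightarrow>\<^sub>E {0..<N}) \<and>
            (\<forall>x\<in>{0..<N}. \<forall>y\<in>{0..<N}. g x y \<in> {0..<N}) \<and>
            (\<forall>a\<in>{0..<N ^ L}. \<forall>b\<in>{0..<N ^ L}. \<forall>i\<in>{0..<L}.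
                h ((a * b) mod (N ^ L)) i = g (h a i) (h b i)))"
proof
  assume "\<exists>(h :: nat \<Rightarrow> nat \<Rightarrow> nat) (g :: nat \<Rightarrow> nat \<Rightarrow> nat).
            bij_betw h {0..<N ^ L} ({0..<L} \<rightarrow>\<^sub>E {0..<N}) \<and>
            (\<forall>x\<in>{0..<N}. \<forall>y\<in>{0..<N}. g x y \<in> {0..<N}) \<and>
            (\<forall>a\<in>{0..<N ^ L}. \<forall>b\<in>{0..<N ^ L}. \<forall>i\<in>{0..<L}.
                h ((a * b) mod (N ^ L)) i = g (h a i) (h b i))"
  then obtain h g where bij: "bij_betw h {0..<N ^ L} ({0..<L} \<rightarrow>\<^sub>E {0..<N})"
    and hom: "\<forall>a\<in>{0..<N ^ L}. \<forall>b\<in>{0..<N ^ L}. \<forall>i\<in>{0..<L}.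
                h ((a * b) mod (N ^ L)) i = g (h a i) (h b i)"
    by blast
  define M where "M = N ^ L"
  define F where "F = ({0..<L} \<rightarrow>\<^sub>E {0..<N})"
  have M0: "M > 0" using assms by (simp add: M_def)
  have bij': "bij_betw h {0..<M} F" using bij by (simp add: M_def F_def)
  have inj: "inj_on h {0..<M}" using bij' bij_betw_imp_inj_on by blast
  have img: "h ` {0..<M} = F" using bij' bij_betw_imp_surj_on by blast
  have hom': "\<And>a b i. a < M \<Longrightarrow> b < M \<Longrightarrow> i < L \<Longrightarrow> h ((a * b) mod M) i = g (h a i) (h b i)"
    using hom by (simp add: M_def)
  have inF: "\<And>a. a < M \<Longrightarrow> h a \<in> F" using img by auto
  have rng: "h a i < N" if "a < M" "i < L" for a i
  proof -
    have "h a \<in> F" using inF that(1) .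
    then show ?thesis using that(2) unfolding F_def by (simp add: PiE_iff)
  qed
  have surjc: "\<exists>a<M. h a i = x" if "x < N" "i < L" for x i
  proof -
    have "(\<lambda>k. if k < L then x else undefined) \<in> F" using that by (auto simp: F_def)
    then obtain a where "a < M" "h a = (\<lambda>k. if k < L then x else undefined)"
      using img by (metis atLeastLessThan_iff imageE)
    then show ?thesis using that by auto
  qed
  have L0: "0 < L" using assms by simp
  have rabs: "g x (h 0 i) = h 0 i" if xN: "x < N" and iL: "i < L" for x i
  proof -
    obtain a where a: "a < M" "h a i = x" using surjc[OF xN iL] by blast
    show ?thesis using hom'[of a 0 i] a M0 iL by simp
  qed
  have labs: "g (h 0 i) y = h 0 i" if xN: "y < N" and iL: "i < L" for y i
  proof -
    obtain a where a: "a < M" "h a i = y" using surjc[OF xN iL] by blast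
    show ?thesis using hom'[of 0 a i] a M0 iL by simp
  qed
  define z where "z = h 0 0"
  have hz: "h 0 i = z" if "i < L" for i
  proof -
    have "h 0 i = g (h 0 0) (h 0 i)" using rabs[of "h 0 0" i] rng[of 0 0] M0 L0 that by simp
    also have "\<dots> = h 0 0" using labs[of "h 0 i" 0] rng[of 0 i] M0 L0 that by simp
    finally show ?thesis by (simp add: z_def)
  qed
  have hpow: "h (a ^ Suc j mod M) i = gpow g (h a i) j" if "a < M" "i < L" for a i j
  proof (induction j)
    case 0 then show ?case using that by simp
  next
    case (Suc j)
    have eq: "a ^ Suc (Suc j) mod M = ((a ^ Suc j mod M) * a) mod M"
      by (metis mod_mult_left_eq power_Suc2)
    have lt: "a ^ Suc j mod M < M" using M0 by (rule mod_less_divisor)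
    have "h (a ^ Suc (Suc j) mod M) i = g (h (a ^ Suc j mod M) i) (h a i)"
      unfolding eq using hom'[OF lt that] .
    also have "\<dots> = g (gpow g (h a i) j) (h a i)" by (simp only: Suc.IH)
    finally show ?case by (simp only: gpow.simps)
  qed
  define J where "J = N * L - 1"
  have SJ: "Suc J = N * L" using assms by (simp add: J_def)
  define B where "B = {a\<in>{0..<M}. a ^ (N*L) mod M = 0}"
  define C where "C = {x\<in>{0..<N}. gpow g x J = z}"
  have hB: "h ` B = ({0..<L} \<rightarrow>\<^sub>E C)"
  proof
    show "h ` B \<subseteq> ({0..<L} \<rightarrow>\<^sub>E C)"
    proof
      fix f assume "f \<in> h ` B"
      then obtain a where a: "a < M" "a ^ (N*L) mod M = 0" "f = h a" by (auto simp: B_def)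
      have "gpow g (h a i) J = z" if "i < L" for i
        using hpow[of a i J] a that hz SJ by simp
      then show "f \<in> ({0..<L} \<rightarrow>\<^sub>E C)" using inF[OF a(1)] a rng
        by (auto simp: F_def C_def PiE_iff)
    qed
  next
    show "({0..<L} \<rightarrow>\<^sub>E C) \<subseteq> h ` B"
    proof
      fix f assume f: "f \<in> ({0..<L} \<rightarrow>\<^sub>E C)"
      then have "f \<in> F" by (auto simp: F_def C_def PiE_iff)
      then obtain a where a: "a < M" "f = h a" using img by (metis atLeastLessThan_iff imageE)
      have p: "a ^ (N*L) mod M < M" using M0 by simp
      have "h (a ^ (N*L) mod M) = h 0"
      proof (rule PiE_ext)
        show "h (a ^ (N*L) mod M) \<in> {0..<L} \<rightarrow>\<^sub>E {0..<N}" using inF[OF p] by (simp only: F_def)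
        show "h 0 \<in> {0..<L} \<rightarrow>\<^sub>E {0..<N}" using inF[OF M0] by (simp only: F_def)
      next
        fix i assume i: "i \<in> {0..<L}"
        have "f i \<in> C" using f i by auto
        then show "h (a ^ (N*L) mod M) i = h 0 i"
          using hpow[of a i J] a i hz SJ by (auto simp: C_def)
      qed
      then have "a ^ (N*L) mod M = 0" using inj p M0 by (auto dest: inj_onD)
      then show "f \<in> h ` B" using a by (auto simp: B_def)
    qed
  qed
  have cB: "card B = card C ^ L"
  proof -
    have "card (h ` B) = card B" using inj by (rule card_image[OF inj_on_subset]) (auto simp: B_def)
    moreover have "card ({0..<L} \<rightarrow>\<^sub>E C) = card C ^ L" by (simp add: card_PiE)
    ultimately show ?thesis using hB by simp
  qed
  define r where "r = \<Prod>(prime_factors N)"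
  have "r \<noteq> 0" by (simp add: r_def prime_factors_dvd)
  then have r0: "r > 0" by simp
  have rM: "r dvd M"
  proof -
    have "r dvd N"
      unfolding r_def
    proof (rule multiplicity_le_imp_dvd)
      show "\<Prod>(prime_factors N) \<noteq> 0" by (simp add: prime_factors_dvd)
    next
      fix q :: nat assume q: "prime q"
      show "multiplicity q (\<Prod>(prime_factors N)) \<le> multiplicity q N"
        using mult_rad[of N q] q assms
        by (simp add: Suc_le_eq prime_multiplicity_gt_zero_iff)
    qed
    moreover have "N dvd M" using assms by (cases L) (auto simp: M_def)
    ultimately show ?thesis by (rule dvd_trans)
  qed
  have B2: "B = (\<lambda>k. r * k) ` {..<M div r}"
  proof -
    have e: "(a ^ (N*L) mod M = 0) = (r dvd a)" for a
      using nil_iff[of N L a] assms by (simp add: M_def r_def mod_eq_0_iff_dvd)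
    have "B = {a. a < M \<and> r dvd a}"
      by (auto simp: B_def e)
    also have "\<dots> = (\<lambda>k. r * k) ` {..<M div r}"
    proof safe
      fix a assume "a < M" "r dvd a"
      then obtain k where "a = r * k" by blast
      moreover have "k < M div r" using \<open>a < M\<close> \<open>a = r * k\<close> r0 rM
        by (metis dvd_mult_div_cancel mult_less_cancel1)
      ultimately show "a \<in> (\<lambda>k. r * k) ` {..<M div r}" by blast
    next
      fix k assume "k < M div r"
      then show "r * k < M" using r0 rM by (metis dvd_mult_div_cancel mult_less_cancel1)
    qed simp
    finally show ?thesis .
  qed
  have "card B = M div r" unfolding B2 using r0 by (subst card_image) (auto simp: inj_on_def)
  then have "card C ^ L * r = M" using cB rM by simp
  then have key: "card C ^ L * r = N ^ L" by (simp add: M_def)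
  obtain p :: nat where p: "prime p" "p dvd N" using assms prime_factor_nat[of N] by auto
  have C0: "card C \<noteq> 0"
  proof
    assume "card C = 0"
    then have "card C ^ L * r = 0" using assms by simp
    with key show False using assms by simp
  qed
  have "multiplicity p (card C ^ L * r) = L * multiplicity p (card C) + 1"
    using p C0 r0 mult_rad[of N p] assms
    by (simp add: prime_elem_multiplicity_mult_distrib prime_elem_multiplicity_power_distrib r_def)
  moreover have "multiplicity p (N ^ L) = L * multiplicity p N"
    using p assms by (simp add: prime_elem_multiplicity_power_distrib)
  ultimately have "L * multiplicity p (card C) + 1 = L * multiplicity p N" using key by simp
  then have "(1 + multiplicity p (card C) * L) mod L = 0" by (simp add: mult.commute add.commute)
  moreover have "(1 + multiplicity p (card C) * L) mod L = 1 mod L" by (rule mod_mult_self1)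
  ultimately show False using assms by simp
qed

end
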